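(* Let $n\ge d\ge 1$, let $\{\tilde Q(\theta):\theta\in\Theta\}$ be an orthogonal reduction parameterization of $O(d+1)$ to $e_1$, with blocks $\tilde Q(\theta)=\begin{pmatrix}\mu(\theta)&y(\theta)^*\\ x(\theta)&\tilde O(\theta)\end{pmatrix}$, and let $Q^{(k)}(\theta)$ be its embedding as defined below. Define $\Phi:\Theta^n\to\mathbb{R}^{(n+d)\times n}$ by $\Phi(\theta_1,\dots,\theta_n)=Q^{(n)}(\theta_n)\cdots Q^{(1)}(\theta_1)\begin{pmatrix}\mathbb{I}_n\\ 0_{d,n}\end{pmatrix}$, and identify a pair $(A,C)$ with its stack $\begin{pmatrix} C\\ A\end{pmatrix}$. Then $\Phi$ restricted to $\{(\theta_1,\dots,\theta_n):\mu(\theta_k)>0\ \forall k\}$ is a one-to-one correspondence onto the set of strict OTSON pairs, and $\Phi$ restricted to $\{(\theta_1,\dots,\theta_n):\mu(\theta_k)\neq 0\ \forall k\}$ is a one-to-one correspondence onto the set of unreduced OTSON pairs.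
   Context: ${}^*$ denotes transpose; $A$ is real $n\times n$, $C$ real $d\times n$, $Q=\begin{pmatrix} C\\ A\end{pmatrix}$. $(A,C)$ is OTSON if $A^*A=\mathbb{I}_n-C^*C$ and $Q_{i,j}=0$ for $j>i$; it is unreduced if $Q_{i,i}\ne 0$ for all $1\le i\le n$, and strict if $Q_{i,i}>0$ for all $1\le i\le n$. An orthogonal reduction parameterization (ORP) of $O(m)$ to $e_k$ is a family $\{\tilde Q(\theta):\theta\in\Theta\}$, $\Theta\subset\mathbb{R}^{m-1}$, of real orthogonal $m\times m$ matrices such that for every nonzero $h\in\mathbb{R}^m$ there is a unique $\theta(h)\in\Theta$ with $\tilde Q(\theta)^*h=\|h\|e_k$. Here $\mu\in\mathbb{R}$, $x,y\in\mathbb{R}^d$, $\tilde O\in\mathbb{R}^{d\times d}$, and the embedding is $Q^{(k)}(\theta)=\mathbb{I}_{k-1}\oplus\begin{pmatrix}\mu&0_{1,n-k}&y^*\\ 0_{n-k,1}&\mathbb{I}_{n-k}&0_{n-k,d}\\ x&0_{d,n-k}&\tilde O\end{pmatrix}$ (all blocks evaluated at $\theta$), an $(n+d)\times(n+d)$ matrix. *)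

theory Defs
  imports "Jordan_Normal_Form.Matrix"
begin

(* Conventions: matrices are Jordan_Normal_Form matrices ('a mat), indices 0-based.
   Paper's 1-based index i corresponds to i-1 here. *)

definition vnorm :: "real vec \<Rightarrow> real" where
  "vnorm h = sqrt (h \<bullet> h)"

definition orthogonal_mat :: "nat \<Rightarrow> real mat \<Rightarrow> bool" where
  "orthogonal_mat m Q \<longleftrightarrow> Q \<in> carrier_mat m m \<and> transpose_mat Q * Q = 1\<^sub>m m"

definition ORP :: "nat \<Rightarrow> nat \<Rightarrow> real vec set \<Rightarrow> (real vec \<Rightarrow> real mat) \<Rightarrow> bool" where
  "ORP m k Theta Qt \<longleftrightarrow>
     Theta \<subseteq> carrier_vec (m - 1) \<and>
     (\<forall>\<theta>\<in>Theta. orthogonal_mat m (Qt \<theta>)) \<and>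
     (\<forall>h\<in>carrier_vec m. h \<noteq> 0\<^sub>v m \<longrightarrow>
        (\<exists>!\<theta>. \<theta> \<in> Theta \<and> transpose_mat (Qt \<theta>) *\<^sub>v h = vnorm h \<cdot>\<^sub>v unit_vec m (k - 1)))"

definition blk_mu :: "(real vec \<Rightarrow> real mat) \<Rightarrow> real vec \<Rightarrow> real" where
  "blk_mu Qt \<theta> = Qt \<theta> $$ (0, 0)"

definition blk_x :: "nat \<Rightarrow> (real vec \<Rightarrow> real mat) \<Rightarrow> real vec \<Rightarrow> real vec" where
  "blk_x d Qt \<theta> = vec d (\<lambda>i. Qt \<theta> $$ (i + 1, 0))"

definition blk_y :: "nat \<Rightarrow> (real vec \<Rightarrow> real mat) \<Rightarrow> real vec \<Rightarrow> real vec" where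
  "blk_y d Qt \<theta> = vec d (\<lambda>j. Qt \<theta> $$ (0, j + 1))"

definition blk_O :: "nat \<Rightarrow> (real vec \<Rightarrow> real mat) \<Rightarrow> real vec \<Rightarrow> real mat" where
  "blk_O d Qt \<theta> = mat d d (\<lambda>(i, j). Qt \<theta> $$ (i + 1, j + 1))"

(* Embedding Q^(k)(theta) = I_{k-1} \<oplus> [[mu, 0, y^*],[0, I_{n-k}, 0],[x, 0, O~]],
   an (n+d) x (n+d) matrix; k is 1-based (1 \<le> k \<le> n).  In 0-based indices the
   mu-row/column is k-1 and the last d rows/columns are n, ..., n+d-1. *)
definition embed :: "nat \<Rightarrow> nat \<Rightarrow> (real vec \<Rightarrow> real mat) \<Rightarrow> nat \<Rightarrow> real vec \<Rightarrow> real mat" where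
  "embed n d Qt k \<theta> = mat (n + d) (n + d) (\<lambda>(i, j).
     if i = k - 1 \<and> j = k - 1 then blk_mu Qt \<theta>
     else if i = k - 1 \<and> n \<le> j then blk_y d Qt \<theta> $ (j - n)
     else if n \<le> i \<and> j = k - 1 then blk_x d Qt \<theta> $ (i - n)
     else if n \<le> i \<and> n \<le> j then blk_O d Qt \<theta> $$ (i - n, j - n)
     else if i = k - 1 \<or> j = k - 1 \<or> n \<le> i \<or> n \<le> j then 0
     else if i = j then 1 else 0)"

(* Q^(j)(theta_j) ... Q^(1)(theta_1); ths ! (j-1) = theta_j *)
fun embed_prod :: "nat \<Rightarrow> nat \<Rightarrow> (real vec \<Rightarrow> real mat) \<Rightarrow> real vec list \<Rightarrow> nat \<Rightarrow> real mat" where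
  "embed_prod n d Qt ths 0 = 1\<^sub>m (n + d)"
| "embed_prod n d Qt ths (Suc j) = embed n d Qt (Suc j) (ths ! j) * embed_prod n d Qt ths j"

definition top_id :: "nat \<Rightarrow> nat \<Rightarrow> real mat" where
  "top_id n d = mat (n + d) n (\<lambda>(i, j). if i = j then 1 else 0)"

definition Phi :: "nat \<Rightarrow> nat \<Rightarrow> (real vec \<Rightarrow> real mat) \<Rightarrow> real vec list \<Rightarrow> real mat" where
  "Phi n d Qt ths = embed_prod n d Qt ths n * top_id n d"

definition stack :: "nat \<Rightarrow> nat \<Rightarrow> real mat \<Rightarrow> real mat \<Rightarrow> real mat" where
  "stack n d C A = mat (d + n) n (\<lambda>(i, j). if i < d then C $$ (i, j) else A $$ (i - d, j))"

definition OTSON :: "nat \<Rightarrow> nat \<Rightarrow> real mat \<Rightarrow> real mat \<Rightarrow> bool" where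
  "OTSON n d A C \<longleftrightarrow> A \<in> carrier_mat n n \<and> C \<in> carrier_mat d n \<and>
     transpose_mat A * A = 1\<^sub>m n - transpose_mat C * C \<and>
     (\<forall>i < d + n. \<forall>j < n. i < j \<longrightarrow> stack n d C A $$ (i, j) = 0)"

definition unreduced_OTSON :: "nat \<Rightarrow> nat \<Rightarrow> real mat \<Rightarrow> real mat \<Rightarrow> bool" where
  "unreduced_OTSON n d A C \<longleftrightarrow> OTSON n d A C \<and> (\<forall>i < n. stack n d C A $$ (i, i) \<noteq> 0)"

definition strict_OTSON :: "nat \<Rightarrow> nat \<Rightarrow> real mat \<Rightarrow> real mat \<Rightarrow> bool" where
  "strict_OTSON n d A C \<longleftrightarrow> OTSON n d A C \<and> (\<forall>i < n. stack n d C A $$ (i, i) > 0)"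

end

theory Submission
  imports Defs "Jordan_Normal_Form.Determinant"
begin

lemma mult_entry:
  assumes "A \<in> carrier_mat r m" "B \<in> carrier_mat m c" "i < r" "j < c"
  shows "(A * B) $$ (i, j) = (\<Sum>k\<in>{0..<m}. A $$ (i, k) * B $$ (k, j))"
  using assms by (auto simp: scalar_prod_def)

definition gidx :: "nat \<Rightarrow> nat \<Rightarrow> nat \<Rightarrow> nat" where
  "gidx n j s = (if s = 0 then j else n + (s - 1))"

lemma gidx_inj: "j < n \<Longrightarrow> inj_on (gidx n j) UNIV"
  by (auto simp: inj_on_def gidx_def split: if_splits)

lemma gidx_lt: "j < n \<Longrightarrow> s < Suc d \<Longrightarrow> gidx n j s < n + d"
  by (auto simp: gidx_def)

lemma gidx_image: "j < n \<Longrightarrow> gidx n j ` {0..<Suc d} = {j} \<union> {n..<n+d}"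
proof -
  assume j: "j < n"
  have "x \<in> gidx n j ` {0..<Suc d}" if "x \<in> {j} \<union> {n..<n+d}" for x
  proof (cases "x = j")
    case True then show ?thesis by (auto simp: gidx_def image_iff intro: bexI[of _ 0])
  next
    case False
    then have "x = gidx n j (x - n + 1)" "x - n + 1 \<in> {0..<Suc d}" using that by (auto simp: gidx_def)
    then show ?thesis by blast
  qed
  moreover have "gidx n j ` {0..<Suc d} \<subseteq> {j} \<union> {n..<n+d}" by (auto simp: gidx_def)
  ultimately show ?thesis by blast
qed

lemma gidx_cases:
  assumes "j < n" "a < n + d"
  obtains "a < n" "a \<noteq> j" | s where "s < Suc d" "a = gidx n j s"
proof -
  have "a \<in> {j} \<union> {n..<n+d} \<or> (a \<noteq> j \<and> a < n)" using assms by auto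
  then show ?thesis using that gidx_image[OF assms(1), of d] by (metis atLeastLessThan_iff imageE)
qed

lemma sum_gidx:
  assumes j: "j < n" and z: "\<And>k. k < n + d \<Longrightarrow> k \<noteq> j \<Longrightarrow> k < n \<Longrightarrow> f k = 0"
  shows "(\<Sum>k\<in>{0..<n+d}. f k) = (\<Sum>s\<in>{0..<Suc d}. f (gidx n j s))"
proof -
  have "(\<Sum>k\<in>{0..<n+d}. f k) = (\<Sum>k\<in>gidx n j ` {0..<Suc d}. f k)"
    by (rule sum.mono_neutral_right) (use j z gidx_image[OF j, of d] in auto)
  also have "\<dots> = (\<Sum>s\<in>{0..<Suc d}. f (gidx n j s))"
    using gidx_inj[OF j] by (simp add: sum.reindex inj_on_def)
  finally show ?thesis .
qed

lemma sum_delta_mult: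
  assumes "a < (N::nat)"
  shows "(\<Sum>k\<in>{0..<N}. (if a = k then 1 else 0) * (v k :: real)) = v a"
        "(\<Sum>k\<in>{0..<N}. v k * (if k = a then 1 else 0)) = v a"
  using assms by (simp_all add: of_bool_def[symmetric])

lemma gidx_eq_iff: "j < n \<Longrightarrow> (gidx n j s = gidx n j t) = (s = t)"
  using gidx_inj[of j n] by (auto simp: inj_on_def)

lemma gidx_eq_j: "j < n \<Longrightarrow> (gidx n j t = j) = (t = 0)"
  by (auto simp: gidx_def)

lemma gidx_ne: "j < n \<Longrightarrow> c < n \<Longrightarrow> c \<noteq> j \<Longrightarrow> gidx n j t \<noteq> c"
  by (auto simp: gidx_def)

lemma sum_split: "(\<Sum>k\<in>{0..<d+(n::nat)}. f k) = (\<Sum>k\<in>{0..<d}. f k) + (\<Sum>k\<in>{0..<n}. (f (k + d) :: real))"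
  by (induction n) (auto simp: add.commute)

lemma stack_carrier: "stack n d C A \<in> carrier_mat (n + d) n"
  unfolding carrier_mat_def stack_def by simp

lemma stack_gram:
  assumes A: "A \<in> carrier_mat n n" and C: "C \<in> carrier_mat d n" and a: "a < n" and b: "b < n"
  shows "(transpose_mat (stack n d C A) * stack n d C A) $$ (a, b)
       = (transpose_mat A * A) $$ (a, b) + (transpose_mat C * C) $$ (a, b)"
proof -
  have "(transpose_mat (stack n d C A) * stack n d C A) $$ (a, b)
      = (\<Sum>k\<in>{0..<n+d}. transpose_mat (stack n d C A) $$ (a, k) * stack n d C A $$ (k, b))"
    using mult_entry[OF _ stack_carrier a b] stack_carrier[of n d C A] by simp
  also have "\<dots> = (\<Sum>k\<in>{0..<d+n}. stack n d C A $$ (k, a) * stack n d C A $$ (k, b))"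
    by (rule sum.cong) (use a stack_carrier[of n d C A] in auto)
  also have "\<dots> = (\<Sum>k\<in>{0..<d}. C $$ (k, a) * C $$ (k, b)) + (\<Sum>k\<in>{0..<n}. A $$ (k, a) * A $$ (k, b))"
    unfolding sum_split using a b by (simp add: stack_def)
  also have "(\<Sum>k\<in>{0..<d}. C $$ (k, a) * C $$ (k, b)) = (transpose_mat C * C) $$ (a, b)"
  proof -
    have "(transpose_mat C * C) $$ (a, b) = (\<Sum>k\<in>{0..<d}. transpose_mat C $$ (a, k) * C $$ (k, b))"
      using mult_entry[OF _ C a b] C by simp
    also have "\<dots> = (\<Sum>k\<in>{0..<d}. C $$ (k, a) * C $$ (k, b))" by (rule sum.cong) (use C a in auto)
    finally show ?thesis by simp
  qed
  also have "(\<Sum>k\<in>{0..<n}. A $$ (k, a) * A $$ (k, b)) = (transpose_mat A * A) $$ (a, b)"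
  proof -
    have "(transpose_mat A * A) $$ (a, b) = (\<Sum>k\<in>{0..<n}. transpose_mat A $$ (a, k) * A $$ (k, b))"
      using mult_entry[OF _ A a b] A by simp
    also have "\<dots> = (\<Sum>k\<in>{0..<n}. A $$ (k, a) * A $$ (k, b))" by (rule sum.cong) (use A a in auto)
    finally show ?thesis by simp
  qed
  finally show ?thesis by simp
qed

lemma otson_iff:
  assumes A: "A \<in> carrier_mat n n" and C: "C \<in> carrier_mat d n"
  shows "(transpose_mat A * A = 1\<^sub>m n - transpose_mat C * C) \<longleftrightarrow> (transpose_mat (stack n d C A) * stack n d C A = 1\<^sub>m n)"
proof -
  define X where "X = transpose_mat A * A"
  define Y where "Y = transpose_mat C * C"
  define S where "S = transpose_mat (stack n d C A) * stack n d C A"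
  have Xc: "X \<in> carrier_mat n n" and Yc: "Y \<in> carrier_mat n n" and Sc: "S \<in> carrier_mat n n"
    unfolding X_def Y_def S_def using A C stack_carrier[of n d C A] by auto
  have Sent: "\<And>a b. a < n \<Longrightarrow> b < n \<Longrightarrow> S $$ (a, b) = X $$ (a, b) + Y $$ (a, b)"
    unfolding S_def X_def Y_def by (rule stack_gram[OF A C])
  have "(X = 1\<^sub>m n - Y) \<longleftrightarrow> (\<forall>a<n. \<forall>b<n. X $$ (a, b) = (1\<^sub>m n - Y) $$ (a, b))"
    using Xc Yc unfolding mat_eq_iff by auto
  also have "\<dots> \<longleftrightarrow> (\<forall>a<n. \<forall>b<n. X $$ (a, b) = 1\<^sub>m n $$ (a, b) - Y $$ (a, b))"
    using Yc by simp
  also have "\<dots> \<longleftrightarrow> (\<forall>a<n. \<forall>b<n. S $$ (a, b) = 1\<^sub>m n $$ (a, b))"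
    using Sent by (simp add: eq_diff_eq)
  also have "\<dots> \<longleftrightarrow> (S = 1\<^sub>m n)"
    using Sc unfolding mat_eq_iff by auto
  finally show ?thesis unfolding X_def Y_def S_def .
qed

lemma stack_image:
  "(\<lambda>(A, C). stack n d C A) ` {(A, C). OTSON n d A C \<and> (\<forall>i<n. p (stack n d C A $$ (i, i)))}
   = {M. M \<in> carrier_mat (n + d) n \<and> transpose_mat M * M = 1\<^sub>m n \<and>
     (\<forall>i<n+d. \<forall>c<n. i < c \<longrightarrow> M $$ (i, c) = 0) \<and> (\<forall>k<n. p (M $$ (k, k)))}"
  (is "?L = ?R")
proof
  show "?L \<subseteq> ?R"
  proof
    fix M assume "M \<in> ?L"
    then obtain A C where o: "OTSON n d A C" "\<forall>i<n. p (stack n d C A $$ (i, i))" and M: "M = stack n d C A" by auto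
    have A: "A \<in> carrier_mat n n" and C: "C \<in> carrier_mat d n" using o by (auto simp: OTSON_def)
    have "transpose_mat M * M = 1\<^sub>m n" using o otson_iff[OF A C] M by (simp add: OTSON_def)
    then show "M \<in> ?R" using o M stack_carrier[of n d C A] by (auto simp: OTSON_def add.commute)
  qed
  show "?R \<subseteq> ?L"
  proof
    fix M assume M: "M \<in> ?R"
    define A where "A = mat n n (\<lambda>(i, j). M $$ (i + d, j))"
    define C where "C = mat d n (\<lambda>(i, j). M $$ (i, j))"
    have Ac: "A \<in> carrier_mat n n" and Cc: "C \<in> carrier_mat d n" unfolding A_def C_def by auto
    have S: "stack n d C A = M"
      by (rule eq_matI) (use M in \<open>auto simp: stack_def A_def C_def\<close>)
    have "OTSON n d A C" using M otson_iff[OF Ac Cc] Ac Cc S by (auto simp: OTSON_def add.commute)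
    then show "M \<in> ?L" using S M by (intro image_eqI[of _ _ "(A, C)"]) auto
  qed
qed

locale orp_setting =
  fixes n d :: nat and Theta :: "real vec set" and Qt :: "real vec \<Rightarrow> real mat"
  assumes orp: "ORP (d + 1) 1 Theta Qt"
begin

abbreviation E where "E j \<theta> \<equiv> embed n d Qt (Suc j) \<theta>"

lemma Qt_carrier: "\<theta> \<in> Theta \<Longrightarrow> Qt \<theta> \<in> carrier_mat (Suc d) (Suc d)"
  using orp by (auto simp: ORP_def orthogonal_mat_def)

lemma Qt_orth1: "\<theta> \<in> Theta \<Longrightarrow> transpose_mat (Qt \<theta>) * Qt \<theta> = 1\<^sub>m (Suc d)"
  using orp by (auto simp: ORP_def orthogonal_mat_def)

lemma Qt_orth2: "\<theta> \<in> Theta \<Longrightarrow> Qt \<theta> * transpose_mat (Qt \<theta>) = 1\<^sub>m (Suc d)"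
  using mat_mult_left_right_inverse[OF _ Qt_carrier Qt_orth1] Qt_carrier by auto

lemma E_carrier: "E j \<theta> \<in> carrier_mat (n + d) (n + d)"
  by (simp add: embed_def)

lemma E_G:
  assumes "j < n" "\<theta> \<in> Theta" "s < Suc d" "t < Suc d"
  shows "E j \<theta> $$ (gidx n j s, gidx n j t) = Qt \<theta> $$ (s, t)"
  using assms gidx_lt[OF assms(1), of s d] gidx_lt[OF assms(1), of t d]
  by (auto simp: embed_def gidx_def blk_mu_def blk_x_def blk_y_def blk_O_def)

lemma E_notG:
  assumes "j < n" "a < n" "a \<noteq> j" "b < n + d"
  shows "E j \<theta> $$ (a, b) = (if a = b then 1 else 0)" "E j \<theta> $$ (b, a) = (if b = a then 1 else 0)"
  using assms by (auto simp: embed_def)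

lemma E_G_notG:
  assumes "j < n" "a < n" "a \<noteq> j" "s < Suc d"
  shows "E j \<theta> $$ (gidx n j s, a) = 0" "E j \<theta> $$ (a, gidx n j s) = 0"
  using E_notG[OF assms(1-3) gidx_lt[OF assms(1,4)]] gidx_ne[OF assms(1-3), of s] by auto

lemma multE_notG:
  assumes j: "j < n" and M: "M \<in> carrier_mat (n + d) m" and a: "a < n" "a \<noteq> j" and c: "c < m"
  shows "(E j \<theta> * M) $$ (a, c) = M $$ (a, c)" "(transpose_mat (E j \<theta>) * M) $$ (a, c) = M $$ (a, c)"
proof -
  have "(E j \<theta> * M) $$ (a, c) = (\<Sum>k\<in>{0..<n+d}. E j \<theta> $$ (a, k) * M $$ (k, c))"
    using mult_entry[OF E_carrier M _ c] a by simp
  also have "\<dots> = (\<Sum>k\<in>{0..<n+d}. (if a = k then 1 else 0) * M $$ (k, c))"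
    by (rule sum.cong) (use E_notG[OF j a] in auto)
  also have "\<dots> = M $$ (a, c)" using sum_delta_mult(1)[of a "n+d"] a by simp
  finally show "(E j \<theta> * M) $$ (a, c) = M $$ (a, c)" .
  have "(transpose_mat (E j \<theta>) * M) $$ (a, c) = (\<Sum>k\<in>{0..<n+d}. transpose_mat (E j \<theta>) $$ (a, k) * M $$ (k, c))"
    using mult_entry[OF _ M _ c] a E_carrier[of j \<theta>] by simp
  also have "\<dots> = (\<Sum>k\<in>{0..<n+d}. (if a = k then 1 else 0) * M $$ (k, c))"
  proof (rule sum.cong)
    fix k assume "k \<in> {0..<n+d}"
    then have "transpose_mat (E j \<theta>) $$ (a, k) = E j \<theta> $$ (k, a)" using E_carrier[of j \<theta>] a by simp
    then show "transpose_mat (E j \<theta>) $$ (a, k) * M $$ (k, c) = (if a = k then 1 else 0) * M $$ (k, c)"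
      using E_notG(2)[OF j a, of k] \<open>k \<in> {0..<n+d}\<close> by auto
  qed simp
  also have "\<dots> = M $$ (a, c)" using sum_delta_mult(1)[of a "n+d"] a by simp
  finally show "(transpose_mat (E j \<theta>) * M) $$ (a, c) = M $$ (a, c)" .
qed

lemma multE_G:
  assumes j: "j < n" and th: "\<theta> \<in> Theta" and M: "M \<in> carrier_mat (n + d) m" and s: "s < Suc d" and c: "c < m"
  shows "(E j \<theta> * M) $$ (gidx n j s, c) = (\<Sum>t\<in>{0..<Suc d}. Qt \<theta> $$ (s, t) * M $$ (gidx n j t, c))"
    "(transpose_mat (E j \<theta>) * M) $$ (gidx n j s, c) = (\<Sum>t\<in>{0..<Suc d}. Qt \<theta> $$ (t, s) * M $$ (gidx n j t, c))"
proof -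
  have gl: "gidx n j s < n + d" using gidx_lt[OF j s] .
  have "(E j \<theta> * M) $$ (gidx n j s, c) = (\<Sum>k\<in>{0..<n+d}. E j \<theta> $$ (gidx n j s, k) * M $$ (k, c))"
    using mult_entry[OF E_carrier M gl c] by simp
  also have "\<dots> = (\<Sum>t\<in>{0..<Suc d}. E j \<theta> $$ (gidx n j s, gidx n j t) * M $$ (gidx n j t, c))"
    by (rule sum_gidx[OF j]) (use E_G_notG[OF j _ _ s] in auto)
  also have "\<dots> = (\<Sum>t\<in>{0..<Suc d}. Qt \<theta> $$ (s, t) * M $$ (gidx n j t, c))"
    by (rule sum.cong) (use E_G[OF j th s] in auto)
  finally show "(E j \<theta> * M) $$ (gidx n j s, c) = (\<Sum>t\<in>{0..<Suc d}. Qt \<theta> $$ (s, t) * M $$ (gidx n j t, c))" .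
  have "(transpose_mat (E j \<theta>) * M) $$ (gidx n j s, c) = (\<Sum>k\<in>{0..<n+d}. transpose_mat (E j \<theta>) $$ (gidx n j s, k) * M $$ (k, c))"
    using mult_entry[OF _ M gl c] E_carrier[of j \<theta>] by simp
  also have "\<dots> = (\<Sum>k\<in>{0..<n+d}. E j \<theta> $$ (k, gidx n j s) * M $$ (k, c))"
    by (rule sum.cong) (use E_carrier[of j \<theta>] gl in auto)
  also have "\<dots> = (\<Sum>t\<in>{0..<Suc d}. E j \<theta> $$ (gidx n j t, gidx n j s) * M $$ (gidx n j t, c))"
    by (rule sum_gidx[OF j]) (use E_G_notG[OF j _ _ s] in auto)
  also have "\<dots> = (\<Sum>t\<in>{0..<Suc d}. Qt \<theta> $$ (t, s) * M $$ (gidx n j t, c))"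
    by (rule sum.cong) (use E_G[OF j th _ s] in auto)
  finally show "(transpose_mat (E j \<theta>) * M) $$ (gidx n j s, c) = (\<Sum>t\<in>{0..<Suc d}. Qt \<theta> $$ (t, s) * M $$ (gidx n j t, c))" .
qed


lemma Qt_col_dot:
  assumes "\<theta> \<in> Theta" "s < Suc d" "u < Suc d"
  shows "(\<Sum>t\<in>{0..<Suc d}. Qt \<theta> $$ (t, s) * Qt \<theta> $$ (t, u)) = (if s = u then 1 else 0)"
proof -
  have "(transpose_mat (Qt \<theta>) * Qt \<theta>) $$ (s, u) = (\<Sum>t\<in>{0..<Suc d}. transpose_mat (Qt \<theta>) $$ (s, t) * Qt \<theta> $$ (t, u))"
    using mult_entry[OF _ Qt_carrier[OF assms(1)] assms(2,3)] Qt_carrier[OF assms(1)] by simp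
  also have "\<dots> = (\<Sum>t\<in>{0..<Suc d}. Qt \<theta> $$ (t, s) * Qt \<theta> $$ (t, u))"
    by (rule sum.cong) (use Qt_carrier[OF assms(1)] assms in auto)
  finally show ?thesis using Qt_orth1[OF assms(1)] assms by simp
qed

lemma E_orth1:
  assumes j: "j < n" and th: "\<theta> \<in> Theta"
  shows "transpose_mat (E j \<theta>) * E j \<theta> = 1\<^sub>m (n + d)"
proof (rule eq_matI)
  fix a b assume "a < dim_row (1\<^sub>m (n + d) :: real mat)" "b < dim_col (1\<^sub>m (n + d) :: real mat)"
  then have a: "a < n + d" and b: "b < n + d" by auto
  show "(transpose_mat (E j \<theta>) * E j \<theta>) $$ (a, b) = 1\<^sub>m (n + d) $$ (a, b)"
  proof (cases rule: gidx_cases[OF j a])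
    case 1
    then show ?thesis using multE_notG(2)[OF j E_carrier 1 b, of \<theta> j \<theta>] E_notG(1)[OF j 1 b] a b by simp
  next
    case (2 s)
    have eq: "(transpose_mat (E j \<theta>) * E j \<theta>) $$ (a, b) = (\<Sum>t\<in>{0..<Suc d}. Qt \<theta> $$ (t, s) * E j \<theta> $$ (gidx n j t, b))"
      using multE_G(2)[OF j th E_carrier 2(1) b] 2 by simp
    show ?thesis
    proof (cases rule: gidx_cases[OF j b])
      case 1
      then show ?thesis using eq E_G_notG(1)[OF j 1] gidx_ne[OF j 1] 2 a b by simp
    next
      case (2 u)
      have "(\<Sum>t\<in>{0..<Suc d}. Qt \<theta> $$ (t, s) * E j \<theta> $$ (gidx n j t, b)) = (\<Sum>t\<in>{0..<Suc d}. Qt \<theta> $$ (t, s) * Qt \<theta> $$ (t, u))"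
        by (rule sum.cong) (use E_G[OF j th _ 2(1)] 2 in auto)
      then show ?thesis using eq Qt_col_dot[OF th \<open>s < Suc d\<close> 2(1)] \<open>a = gidx n j s\<close> 2 gidx_eq_iff[OF j] a b by simp
    qed
  qed
qed (use E_carrier in auto)

lemma E_orth2:
  assumes j: "j < n" and th: "\<theta> \<in> Theta"
  shows "E j \<theta> * transpose_mat (E j \<theta>) = 1\<^sub>m (n + d)"
  using mat_mult_left_right_inverse[OF _ E_carrier E_orth1[OF assms]] E_carrier[of j \<theta>] by auto

abbreviation P where "P ths j \<equiv> embed_prod n d Qt ths j"

lemma P_carrier: "P ths j \<in> carrier_mat (n + d) (n + d)"
  by (induction j) (auto simp: embed_def)

lemma top_carrier: "top_id n d \<in> carrier_mat (n + d) n"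
  by (simp add: top_id_def)

lemma P_cong: "(\<And>k. k < j \<Longrightarrow> ths ! k = ths' ! k) \<Longrightarrow> P ths j = P ths' j"
  by (induction j) auto

lemma P_Suc_top: "P ths (Suc j) * top_id n d = E j (ths ! j) * (P ths j * top_id n d)"
  by (simp add: assoc_mult_mat[OF E_carrier P_carrier top_carrier])

lemma P_orth: "j \<le> n \<Longrightarrow> (\<And>k. k < j \<Longrightarrow> ths ! k \<in> Theta) \<Longrightarrow> transpose_mat (P ths j) * P ths j = 1\<^sub>m (n + d)"
proof (induction j)
  case 0 then show ?case by simp
next
  case (Suc j)
  have th: "ths ! j \<in> Theta" and j: "j < n" using Suc by auto
  have IH: "transpose_mat (P ths j) * P ths j = 1\<^sub>m (n + d)" using Suc by auto
  have "transpose_mat (P ths (Suc j)) * P ths (Suc j)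
      = transpose_mat (P ths j) * (transpose_mat (E j (ths ! j)) * E j (ths ! j)) * P ths j"
    using P_carrier[of ths j] E_carrier[of j "ths ! j"]
    by (simp add: transpose_mult[OF E_carrier P_carrier] assoc_mult_mat[of _ "n+d" "n+d" _ "n+d" _ "n+d"])
  also have "\<dots> = 1\<^sub>m (n + d)" using E_orth1[OF j th] IH P_carrier[of ths j] by simp
  finally show ?case .
qed


lemma top_entry: "i < n + d \<Longrightarrow> c < n \<Longrightarrow> top_id n d $$ (i, c) = (if i = c then 1 else 0)"
  by (simp add: top_id_def)

lemma PM_carrier: "P ths j * top_id n d \<in> carrier_mat (n + d) n"
  using P_carrier top_carrier by (metis mult_carrier_mat)

lemma fwd:
  "j \<le> n \<Longrightarrow> (\<And>k. k < j \<Longrightarrow> ths ! k \<in> Theta) \<Longrightarrow>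
   (\<forall>i<n+d. \<forall>c<n. j \<le> c \<longrightarrow> (P ths j * top_id n d) $$ (i, c) = (if i = c then 1 else 0)) \<and>
   (\<forall>i<n+d. \<forall>c<n. i < c \<longrightarrow> (P ths j * top_id n d) $$ (i, c) = 0) \<and>
   (\<forall>c<j. (P ths j * top_id n d) $$ (c, c) = blk_mu Qt (ths ! c))"
proof (induction j)
  case 0
  then show ?case using top_carrier by (simp add: top_entry)
next
  case (Suc j)
  have th: "ths ! j \<in> Theta" and j: "j < n" using Suc by auto
  define M where "M = P ths j * top_id n d"
  have M: "M \<in> carrier_mat (n + d) n" unfolding M_def by (rule PM_carrier)
  have IH: "\<forall>i<n+d. \<forall>c<n. j \<le> c \<longrightarrow> M $$ (i, c) = (if i = c then 1 else 0)"
    "\<forall>i<n+d. \<forall>c<n. i < c \<longrightarrow> M $$ (i, c) = 0"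
    "\<forall>c<j. M $$ (c, c) = blk_mu Qt (ths ! c)" using Suc unfolding M_def by auto
  have eq: "P ths (Suc j) * top_id n d = E j (ths ! j) * M" unfolding M_def by (rule P_Suc_top)
  have colz: "(E j (ths ! j) * M) $$ (i, c) = (if i = c then 1 else 0)" if i: "i < n + d" and c: "c < n" "Suc j \<le> c" for i c
  proof (cases rule: gidx_cases[OF j i])
    case 1 then show ?thesis using multE_notG(1)[OF j M 1 c(1)] IH(1) i c by simp
  next
    case (2 s)
    have "(E j (ths ! j) * M) $$ (i, c) = (\<Sum>t\<in>{0..<Suc d}. Qt (ths ! j) $$ (s, t) * M $$ (gidx n j t, c))"
      using multE_G(1)[OF j th M 2(1) c(1)] 2 by simp
    also have "\<dots> = 0"
      by (rule sum.neutral) (use IH(1) gidx_lt[OF j] gidx_ne[OF j, of c] c in auto)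
    finally show ?thesis using gidx_ne[OF j, of c s] c 2 by auto
  qed
  have "\<forall>i<n+d. \<forall>c<n. Suc j \<le> c \<longrightarrow> (E j (ths ! j) * M) $$ (i, c) = (if i = c then 1 else 0)"
    using colz by auto
  moreover have "\<forall>i<n+d. \<forall>c<n. i < c \<longrightarrow> (E j (ths ! j) * M) $$ (i, c) = 0"
  proof (intro allI impI)
    fix i c assume i: "i < n + d" and c: "c < n" and ic: "i < c"
    show "(E j (ths ! j) * M) $$ (i, c) = 0"
    proof (cases "Suc j \<le> c")
      case True then show ?thesis using colz[OF i c True] ic by simp
    next
      case False
      then have "i < n" "i \<noteq> j" using ic c by auto
      then show ?thesis using multE_notG(1)[OF j M _ _ c] IH(2) i c ic by simp
    qed
  qed
  moreover have "\<forall>c<Suc j. (E j (ths ! j) * M) $$ (c, c) = blk_mu Qt (ths ! c)"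
  proof (intro allI impI)
    fix c assume c: "c < Suc j"
    show "(E j (ths ! j) * M) $$ (c, c) = blk_mu Qt (ths ! c)"
    proof (cases "c = j")
      case False
      then have "c < n" "c \<noteq> j" "c < j" using c j by auto
      then show ?thesis using multE_notG(1)[OF j M _ _ \<open>c < n\<close>] IH(3) by simp
    next
      case True
      have "(E j (ths ! j) * M) $$ (gidx n j 0, j) = (\<Sum>t\<in>{0..<Suc d}. Qt (ths ! j) $$ (0, t) * M $$ (gidx n j t, j))"
        using multE_G(1)[OF j th M _ j] by simp
      also have "\<dots> = (\<Sum>t\<in>{0..<Suc d}. Qt (ths ! j) $$ (0, t) * (if t = 0 then 1 else 0))"
        by (rule sum.cong) (use IH(1) gidx_lt[OF j] gidx_eq_j[OF j] j in auto)
      also have "\<dots> = Qt (ths ! j) $$ (0, 0)" by (rule sum_delta_mult(2)) simp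
      finally show ?thesis using True by (simp add: gidx_def blk_mu_def)
    qed
  qed
  ultimately show ?case unfolding eq by blast
qed


lemma orp_col:
  assumes th: "\<phi> \<in> Theta"
  shows "transpose_mat (Qt \<phi>) *\<^sub>v col (Qt \<phi>) 0 = vnorm (col (Qt \<phi>) 0) \<cdot>\<^sub>v unit_vec (d + 1) 0"
    "col (Qt \<phi>) 0 \<in> carrier_vec (d + 1)" "col (Qt \<phi>) 0 \<noteq> 0\<^sub>v (d + 1)"
proof -
  have Q: "Qt \<phi> \<in> carrier_mat (Suc d) (Suc d)" by (rule Qt_carrier[OF th])
  have hh: "col (Qt \<phi>) 0 \<bullet> col (Qt \<phi>) 0 = 1"
  proof -
    have "(transpose_mat (Qt \<phi>) * Qt \<phi>) $$ (0, 0) = row (transpose_mat (Qt \<phi>)) 0 \<bullet> col (Qt \<phi>) 0"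
      using Q by simp
    also have "row (transpose_mat (Qt \<phi>)) 0 = col (Qt \<phi>) 0" using Q by simp
    finally show ?thesis using Qt_orth1[OF th] by simp
  qed
  have v1: "vnorm (col (Qt \<phi>) 0) = 1" unfolding vnorm_def hh by simp
  show "col (Qt \<phi>) 0 \<in> carrier_vec (d + 1)" using Q by (auto intro!: carrier_vecI)
  show "col (Qt \<phi>) 0 \<noteq> 0\<^sub>v (d + 1)"
  proof
    assume "col (Qt \<phi>) 0 = 0\<^sub>v (d + 1)"
    then have "col (Qt \<phi>) 0 \<bullet> col (Qt \<phi>) 0 = 0" by simp
    then show False using hh by simp
  qed
  have "transpose_mat (Qt \<phi>) *\<^sub>v col (Qt \<phi>) 0 = unit_vec (d + 1) 0"
  proof (rule eq_vecI)
    fix s assume "s < dim_vec (unit_vec (d + 1) 0 :: real vec)"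
    then have s: "s < Suc d" by simp
    have "(transpose_mat (Qt \<phi>) *\<^sub>v col (Qt \<phi>) 0) $ s = (transpose_mat (Qt \<phi>) * Qt \<phi>) $$ (s, 0)"
      using Q s by simp
    then show "(transpose_mat (Qt \<phi>) *\<^sub>v col (Qt \<phi>) 0) $ s = unit_vec (d + 1) 0 $ s"
      using Qt_orth1[OF th] s by simp
  qed (use Q in simp)
  then show "transpose_mat (Qt \<phi>) *\<^sub>v col (Qt \<phi>) 0 = vnorm (col (Qt \<phi>) 0) \<cdot>\<^sub>v unit_vec (d + 1) 0"
    using v1 by simp
qed

lemma col0_unique:
  assumes th: "\<theta> \<in> Theta" "\<theta>' \<in> Theta" and eq: "\<And>s. s < Suc d \<Longrightarrow> Qt \<theta> $$ (s, 0) = Qt \<theta>' $$ (s, 0)"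
  shows "\<theta> = \<theta>'"
proof -
  have ceq: "col (Qt \<theta>') 0 = col (Qt \<theta>) 0"
    by (rule eq_vecI) (use eq Qt_carrier[OF th(1)] Qt_carrier[OF th(2)] in auto)
  let ?h = "col (Qt \<theta>) 0"
  have "\<exists>!\<phi>. \<phi> \<in> Theta \<and> transpose_mat (Qt \<phi>) *\<^sub>v ?h = vnorm ?h \<cdot>\<^sub>v unit_vec (d + 1) (1 - 1)"
    using orp orp_col(2,3)[OF th(1)] unfolding ORP_def by blast
  moreover have "transpose_mat (Qt \<theta>) *\<^sub>v ?h = vnorm ?h \<cdot>\<^sub>v unit_vec (d + 1) (1 - 1)"
    using orp_col(1)[OF th(1)] by simp
  moreover have "transpose_mat (Qt \<theta>') *\<^sub>v ?h = vnorm ?h \<cdot>\<^sub>v unit_vec (d + 1) (1 - 1)"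
    using orp_col(1)[OF th(2)] ceq by simp
  ultimately show ?thesis using th by blast
qed

lemma colj:
  assumes j: "j < n" and th: "\<theta> \<in> Theta" and ths: "\<And>k. k < j \<Longrightarrow> ths ! k \<in> Theta" and s: "s < Suc d"
  shows "(E j \<theta> * (P ths j * top_id n d)) $$ (gidx n j s, j) = Qt \<theta> $$ (s, 0)"
proof -
  have IH: "\<forall>i<n+d. \<forall>c<n. j \<le> c \<longrightarrow> (P ths j * top_id n d) $$ (i, c) = (if i = c then 1 else 0)"
    using fwd[of j ths] j ths by auto
  have "(E j \<theta> * (P ths j * top_id n d)) $$ (gidx n j s, j) = (\<Sum>t\<in>{0..<Suc d}. Qt \<theta> $$ (s, t) * (P ths j * top_id n d) $$ (gidx n j t, j))"
    using multE_G(1)[OF j th PM_carrier s j] by simp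
  also have "\<dots> = (\<Sum>t\<in>{0..<Suc d}. Qt \<theta> $$ (s, t) * (if t = 0 then 1 else 0))"
    by (rule sum.cong) (use IH gidx_lt[OF j] gidx_eq_j[OF j] j in auto)
  also have "\<dots> = Qt \<theta> $$ (s, 0)" by (rule sum_delta_mult(2)) simp
  finally show ?thesis .
qed

lemma inj_P:
  "j \<le> n \<Longrightarrow> (\<And>k. k < j \<Longrightarrow> ths ! k \<in> Theta) \<Longrightarrow> (\<And>k. k < j \<Longrightarrow> ths' ! k \<in> Theta) \<Longrightarrow>
   P ths j * top_id n d = P ths' j * top_id n d \<Longrightarrow> \<forall>k<j. ths ! k = ths' ! k"
proof (induction j)
  case 0 then show ?case by simp
next
  case (Suc j)
  have j: "j < n" and th: "ths ! j \<in> Theta" and th': "ths' ! j \<in> Theta" using Suc.prems by auto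
  have eq: "E j (ths ! j) * (P ths j * top_id n d) = E j (ths' ! j) * (P ths' j * top_id n d)"
    using Suc.prems(4) P_Suc_top by metis
  have "Qt (ths ! j) $$ (s, 0) = Qt (ths' ! j) $$ (s, 0)" if s: "s < Suc d" for s
    using colj[OF j th _ s, of ths] colj[OF j th' _ s, of ths'] eq Suc.prems by simp
  then have teq: "ths ! j = ths' ! j" using col0_unique[OF th th'] by blast
  have "P ths j * top_id n d = transpose_mat (E j (ths ! j)) * (E j (ths ! j) * (P ths j * top_id n d))"
    using E_orth1[OF j th] PM_carrier[of ths j] E_carrier[of j "ths ! j"]
    by (simp add: assoc_mult_mat[symmetric, of _ "n+d" "n+d" _ "n+d" _ n] left_mult_one_mat)
  also have "\<dots> = transpose_mat (E j (ths ! j)) * (E j (ths ! j) * (P ths' j * top_id n d))"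
    using eq teq by simp
  also have "\<dots> = P ths' j * top_id n d"
    using E_orth1[OF j th] PM_carrier[of ths' j] E_carrier[of j "ths ! j"]
    by (simp add: assoc_mult_mat[symmetric, of _ "n+d" "n+d" _ "n+d" _ n] left_mult_one_mat)
  finally have "\<forall>k<j. ths ! k = ths' ! k" using Suc by auto
  then show ?case using teq less_Suc_eq by auto
qed


lemma orp_ex:
  assumes hc: "h \<in> carrier_vec (d + 1)" and hnz: "h \<noteq> 0\<^sub>v (d + 1)"
  shows "\<exists>\<theta>. \<theta> \<in> Theta \<and> transpose_mat (Qt \<theta>) *\<^sub>v h = vnorm h \<cdot>\<^sub>v unit_vec (d + 1) 0"
proof -
  have all: "\<forall>h\<in>carrier_vec (d + 1). h \<noteq> 0\<^sub>v (d + 1) \<longrightarrow>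
        (\<exists>!\<theta>. \<theta> \<in> Theta \<and> transpose_mat (Qt \<theta>) *\<^sub>v h = vnorm h \<cdot>\<^sub>v unit_vec (d + 1) (1 - 1))"
    using orp unfolding ORP_def by (elim conjE)
  have "\<exists>!\<theta>. \<theta> \<in> Theta \<and> transpose_mat (Qt \<theta>) *\<^sub>v h = vnorm h \<cdot>\<^sub>v unit_vec (d + 1) (1 - 1)"
    using bspec[OF all hc] hnz by (rule mp)
  then obtain \<theta> where "\<theta> \<in> Theta \<and> transpose_mat (Qt \<theta>) *\<^sub>v h = vnorm h \<cdot>\<^sub>v unit_vec (d + 1) (1 - 1)"
    by (rule ex1E)
  then show ?thesis by (intro exI[of _ \<theta>]) simp
qed

lemma Theta_ne: "\<exists>\<theta>. \<theta> \<in> Theta"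
proof -
  have u: "unit_vec (d + 1) 0 \<noteq> (0\<^sub>v (d + 1) :: real vec)"
  proof
    assume "unit_vec (d + 1) 0 = (0\<^sub>v (d + 1) :: real vec)"
    then have "unit_vec (d + 1) 0 $ 0 = (0\<^sub>v (d + 1) :: real vec) $ 0" by simp
    then show False by simp
  qed
  have uc: "unit_vec (d + 1) 0 \<in> carrier_vec (d + 1)" by simp
  show ?thesis using orp_ex[OF uc u] by blast
qed

lemma surj_P:
  "j \<le> n \<Longrightarrow> M \<in> carrier_mat (n + d) n \<Longrightarrow> transpose_mat M * M = 1\<^sub>m n \<Longrightarrow>
   (\<forall>i<n+d. \<forall>c<n. i < c \<longrightarrow> M $$ (i, c) = 0) \<Longrightarrow>
   (\<forall>i<n+d. \<forall>c<n. j \<le> c \<longrightarrow> M $$ (i, c) = (if i = c then 1 else 0)) \<Longrightarrow>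
   \<exists>ths. length ths = n \<and> set ths \<subseteq> Theta \<and> P ths j * top_id n d = M"
proof (induction j arbitrary: M)
  case 0
  obtain \<theta>0 where th0: "\<theta>0 \<in> Theta" using Theta_ne by blast
  have "M = top_id n d"
    by (rule eq_matI) (use 0 top_carrier in \<open>auto simp: top_entry\<close>)
  then have "P (replicate n \<theta>0) 0 * top_id n d = M" using top_carrier by simp
  then show ?case using th0 by (intro exI[of _ "replicate n \<theta>0"]) auto
next
  case (Suc j M)
  have j: "j < n" using Suc.prems by simp
  have M: "M \<in> carrier_mat (n + d) n" using Suc.prems by simp
  have tri: "\<And>i c. i < n + d \<Longrightarrow> c < n \<Longrightarrow> i < c \<Longrightarrow> M $$ (i, c) = 0" using Suc.prems by simp
  have cols: "\<And>i c. i < n + d \<Longrightarrow> c < n \<Longrightarrow> Suc j \<le> c \<Longrightarrow> M $$ (i, c) = (if i = c then 1 else 0)"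
    using Suc.prems by simp
  have orthM: "(\<Sum>k\<in>{0..<n+d}. M $$ (k, a) * M $$ (k, b)) = (if a = b then 1 else 0)" if "a < n" "b < n" for a b
  proof -
    have "(transpose_mat M * M) $$ (a, b) = (\<Sum>k\<in>{0..<n+d}. transpose_mat M $$ (a, k) * M $$ (k, b))"
      using mult_entry[OF _ M that] M by simp
    also have "\<dots> = (\<Sum>k\<in>{0..<n+d}. M $$ (k, a) * M $$ (k, b))"
      by (rule sum.cong) (use M that in auto)
    finally show ?thesis using Suc.prems(3) that by simp
  qed
  have z: "M $$ (k, j) = 0" if k: "k < n + d" "k < n" "k \<noteq> j" for k
  proof (cases "k < j")
    case True show ?thesis by (rule tri) (use k True j in auto)
  next
    case False
    then have kj: "Suc j \<le> k" using k by simp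
    have "(\<Sum>i\<in>{0..<n+d}. M $$ (i, k) * M $$ (i, j)) = (\<Sum>i\<in>{0..<n+d}. (if k = i then 1 else 0) * M $$ (i, j))"
      by (rule sum.cong) (use cols[OF _ k(2) kj] in auto)
    also have "\<dots> = M $$ (k, j)" by (rule sum_delta_mult(1)) (use k in simp)
    finally show ?thesis using orthM[OF k(2) j] k by simp
  qed
  define h where "h = vec (Suc d) (\<lambda>s. M $$ (gidx n j s, j))"
  have hc: "h \<in> carrier_vec (d + 1)" unfolding h_def by simp
  have hh: "h \<bullet> h = 1"
  proof -
    have "h \<bullet> h = (\<Sum>s\<in>{0..<Suc d}. M $$ (gidx n j s, j) * M $$ (gidx n j s, j))"
      unfolding h_def scalar_prod_def by simp
    also have "\<dots> = (\<Sum>k\<in>{0..<n+d}. M $$ (k, j) * M $$ (k, j))"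
      by (rule sum_gidx[OF j, symmetric]) (use z in simp)
    also have "\<dots> = 1" using orthM[OF j j] by simp
    finally show ?thesis .
  qed
  have hnz: "h \<noteq> 0\<^sub>v (d + 1)"
  proof
    assume "h = 0\<^sub>v (d + 1)" then have "h \<bullet> h = 0" by simp
    then show False using hh by simp
  qed
  have vn: "vnorm h = 1" unfolding vnorm_def hh by simp
  obtain \<theta> where th: "\<theta> \<in> Theta" and thh: "transpose_mat (Qt \<theta>) *\<^sub>v h = unit_vec (d + 1) 0"
    using orp_ex[OF hc hnz] vn by auto
  have Q: "Qt \<theta> \<in> carrier_mat (Suc d) (Suc d)" by (rule Qt_carrier[OF th])
  have "Qt \<theta> *\<^sub>v unit_vec (Suc d) 0 = Qt \<theta> *\<^sub>v (transpose_mat (Qt \<theta>) *\<^sub>v h)" using thh by simp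
  also have "\<dots> = (Qt \<theta> * transpose_mat (Qt \<theta>)) *\<^sub>v h"
    using Q hc by (simp add: assoc_mult_mat_vec[of _ "Suc d" "Suc d" _ "Suc d"])
  also have "\<dots> = h" using Qt_orth2[OF th] hc by simp
  finally have Qh: "Qt \<theta> *\<^sub>v unit_vec (Suc d) 0 = h" .
  have colth: "Qt \<theta> $$ (s, 0) = M $$ (gidx n j s, j)" if s: "s < Suc d" for s
  proof -
    have "(Qt \<theta> *\<^sub>v unit_vec (Suc d) 0) $ s = row (Qt \<theta>) s \<bullet> unit_vec (Suc d) 0" using Q s by simp
    also have "\<dots> = Qt \<theta> $$ (s, 0)" using Q s by simp
    finally show ?thesis using Qh s unfolding h_def by simp
  qed
  define E' where "E' = E j \<theta>"
  have E'c: "E' \<in> carrier_mat (n + d) (n + d)" unfolding E'_def by (rule E_carrier)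
  define M' where "M' = transpose_mat E' * M"
  have M'c: "M' \<in> carrier_mat (n + d) n" unfolding M'_def using E'c M by simp
  have EEt: "E' * transpose_mat E' = 1\<^sub>m (n + d)" unfolding E'_def by (rule E_orth2[OF j th])
  have "transpose_mat M' * M' = transpose_mat M * (E' * transpose_mat E') * M"
    unfolding M'_def using E'c M
    by (simp add: transpose_mult[of _ "n+d" "n+d" _ n] assoc_mult_mat[of _ n "n+d" _ "n+d" _ n]
        assoc_mult_mat[of _ "n+d" "n+d" _ "n+d" _ n])
  also have "\<dots> = 1\<^sub>m n" using EEt M Suc.prems(3) by simp
  finally have M'o: "transpose_mat M' * M' = 1\<^sub>m n" .
  have colsM': "M' $$ (i, c) = (if i = c then 1 else 0)" if i: "i < n + d" and c: "c < n" "j \<le> c" for i c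
  proof (cases rule: gidx_cases[OF j i])
    case 1
    then show ?thesis
    proof (cases "c = j")
      case True
      then show ?thesis using multE_notG(2)[OF j M 1 c(1), of \<theta>] z[OF i 1(1) 1(2)] 1 unfolding M'_def E'_def by simp
    next
      case False
      then show ?thesis using multE_notG(2)[OF j M 1 c(1), of \<theta>] cols[OF i c(1)] c unfolding M'_def E'_def by simp
    qed
  next
    case (2 s)
    have eq: "M' $$ (i, c) = (\<Sum>t\<in>{0..<Suc d}. Qt \<theta> $$ (t, s) * M $$ (gidx n j t, c))"
      using multE_G(2)[OF j th M 2(1) c(1)] 2 unfolding M'_def E'_def by simp
    show ?thesis
    proof (cases "c = j")
      case True
      have "(\<Sum>t\<in>{0..<Suc d}. Qt \<theta> $$ (t, s) * M $$ (gidx n j t, c)) = (\<Sum>t\<in>{0..<Suc d}. Qt \<theta> $$ (t, s) * Qt \<theta> $$ (t, 0))"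
        by (rule sum.cong) (use colth True in auto)
      then show ?thesis using eq Qt_col_dot[OF th 2(1), of 0] 2 True gidx_eq_j[OF j] by simp
    next
      case False
      have "(\<Sum>t\<in>{0..<Suc d}. Qt \<theta> $$ (t, s) * M $$ (gidx n j t, c)) = 0"
        by (rule sum.neutral) (use cols gidx_lt[OF j] gidx_ne[OF j, of c] c False in auto)
      then show ?thesis using eq gidx_ne[OF j c(1), of s] False c 2 by auto
    qed
  qed
  have triM': "M' $$ (i, c) = 0" if i: "i < n + d" and c: "c < n" and ic: "i < c" for i c
  proof (cases "j \<le> c")
    case True then show ?thesis using colsM'[OF i c True] ic by simp
  next
    case False
    then have "i < n" "i \<noteq> j" using ic c by auto
    then show ?thesis using multE_notG(2)[OF j M _ _ c, of i \<theta>] tri[OF i c ic] unfolding M'_def E'_def by simp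
  qed
  obtain ths where ths: "length ths = n" "set ths \<subseteq> Theta" "P ths j * top_id n d = M'"
    using Suc.IH[of M'] j M'c M'o triM' colsM' by auto
  define ths2 where "ths2 = ths[j := \<theta>]"
  have l2: "length ths2 = n" unfolding ths2_def using ths by simp
  have s2: "set ths2 \<subseteq> Theta" unfolding ths2_def using ths th set_update_subset_insert by fastforce
  have "P ths2 j = P ths j" by (rule P_cong) (simp add: ths2_def)
  moreover have "ths2 ! j = \<theta>" unfolding ths2_def using ths j by simp
  ultimately have "P ths2 (Suc j) * top_id n d = E' * M'" using P_Suc_top[of ths2 j] ths unfolding E'_def by simp
  also have "\<dots> = (E' * transpose_mat E') * M" unfolding M'_def using E'c M
    by (simp add: assoc_mult_mat[of _ "n+d" "n+d" _ "n+d" _ n])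
  also have "\<dots> = M" using EEt M by simp
  finally show ?case using l2 s2 by blast
qed


lemma top_gram: "transpose_mat (top_id n d) * top_id n d = 1\<^sub>m n"
proof (rule eq_matI)
  fix a b assume "a < dim_row (1\<^sub>m n :: real mat)" "b < dim_col (1\<^sub>m n :: real mat)"
  then have a: "a < n" and b: "b < n" by auto
  have "(transpose_mat (top_id n d) * top_id n d) $$ (a, b) = (\<Sum>k\<in>{0..<n+d}. transpose_mat (top_id n d) $$ (a, k) * top_id n d $$ (k, b))"
    using mult_entry[OF _ top_carrier a b] top_carrier by simp
  also have "\<dots> = (\<Sum>k\<in>{0..<n+d}. (if a = k then 1 else 0) * top_id n d $$ (k, b))"
    by (rule sum.cong) (use a b in \<open>auto simp: top_id_def\<close>)
  also have "\<dots> = top_id n d $$ (a, b)" by (rule sum_delta_mult(1)) (use a in simp)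
  finally show "(transpose_mat (top_id n d) * top_id n d) $$ (a, b) = 1\<^sub>m n $$ (a, b)"
    using a b by (simp add: top_entry)
qed (use top_carrier in auto)

definition Tset :: "(real \<Rightarrow> bool) \<Rightarrow> real mat set" where
  "Tset p = {M. M \<in> carrier_mat (n + d) n \<and> transpose_mat M * M = 1\<^sub>m n \<and>
     (\<forall>i<n+d. \<forall>c<n. i < c \<longrightarrow> M $$ (i, c) = 0) \<and> (\<forall>k<n. p (M $$ (k, k)))}"

lemma main_bij:
  "bij_betw (Phi n d Qt) {ths. length ths = n \<and> set ths \<subseteq> Theta \<and> (\<forall>k<n. p (blk_mu Qt (ths ! k)))} (Tset p)"
  unfolding bij_betw_def
proof (intro conjI)
  show "inj_on (Phi n d Qt) {ths. length ths = n \<and> set ths \<subseteq> Theta \<and> (\<forall>k<n. p (blk_mu Qt (ths ! k)))}"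
  proof (rule inj_onI)
    fix x y assume x: "x \<in> {ths. length ths = n \<and> set ths \<subseteq> Theta \<and> (\<forall>k<n. p (blk_mu Qt (ths ! k)))}"
      and y: "y \<in> {ths. length ths = n \<and> set ths \<subseteq> Theta \<and> (\<forall>k<n. p (blk_mu Qt (ths ! k)))}"
      and eq: "Phi n d Qt x = Phi n d Qt y"
    have "\<forall>k<n. x ! k = y ! k"
      by (rule inj_P[of n x y]) (use x y eq in \<open>auto simp: Phi_def\<close>)
    then show "x = y" using x y by (auto intro: nth_equalityI)
  qed
  show "Phi n d Qt ` {ths. length ths = n \<and> set ths \<subseteq> Theta \<and> (\<forall>k<n. p (blk_mu Qt (ths ! k)))} = Tset p"
  proof
    show "Phi n d Qt ` {ths. length ths = n \<and> set ths \<subseteq> Theta \<and> (\<forall>k<n. p (blk_mu Qt (ths ! k)))} \<subseteq> Tset p"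
    proof
      fix M assume "M \<in> Phi n d Qt ` {ths. length ths = n \<and> set ths \<subseteq> Theta \<and> (\<forall>k<n. p (blk_mu Qt (ths ! k)))}"
      then obtain ths where ths: "length ths = n" "set ths \<subseteq> Theta" "\<forall>k<n. p (blk_mu Qt (ths ! k))"
        and M: "M = P ths n * top_id n d" by (auto simp: Phi_def)
      have thk: "\<And>k. k < n \<Longrightarrow> ths ! k \<in> Theta" using ths by auto
      note F = fwd[of n ths, OF le_refl thk]
      have "transpose_mat M * M = transpose_mat (top_id n d) * (transpose_mat (P ths n) * P ths n) * top_id n d"
        unfolding M using P_carrier[of ths n] top_carrier
        by (simp add: transpose_mult[of _ "n+d" "n+d" _ n] assoc_mult_mat[of _ n "n+d" _ "n+d" _ n]
          assoc_mult_mat[of _ "n+d" "n+d" _ "n+d" _ n])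
      also have "\<dots> = 1\<^sub>m n" using P_orth[of n ths, OF le_refl thk] top_gram top_carrier by simp
      finally show "M \<in> Tset p" unfolding Tset_def using F ths(3) PM_carrier M by auto
    qed
    show "Tset p \<subseteq> Phi n d Qt ` {ths. length ths = n \<and> set ths \<subseteq> Theta \<and> (\<forall>k<n. p (blk_mu Qt (ths ! k)))}"
    proof
      fix M assume M: "M \<in> Tset p"
      obtain ths where ths: "length ths = n" "set ths \<subseteq> Theta" "P ths n * top_id n d = M"
        using surj_P[of n M] M unfolding Tset_def by auto
      have thk: "\<And>k. k < n \<Longrightarrow> ths ! k \<in> Theta" using ths by auto
      have "\<forall>k<n. p (blk_mu Qt (ths ! k))" using fwd[of n ths, OF le_refl thk] M ths(3) unfolding Tset_def by auto
      then show "M \<in> Phi n d Qt ` {ths. length ths = n \<and> set ths \<subseteq> Theta \<and> (\<forall>k<n. p (blk_mu Qt (ths ! k)))}"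
        using ths unfolding Phi_def by (intro image_eqI[of _ _ ths]) auto
    qed
  qed
qed

end

theorem theorem6p4:
  fixes n d :: nat and Theta :: "real vec set" and Qt :: "real vec \<Rightarrow> real mat"
  assumes "1 \<le> d" and "d \<le> n"
    and "ORP (d + 1) 1 Theta Qt"
  shows "bij_betw (Phi n d Qt)
           {ths. length ths = n \<and> set ths \<subseteq> Theta \<and> (\<forall>k < n. blk_mu Qt (ths ! k) > 0)}
           ((\<lambda>(A, C). stack n d C A) ` {(A, C). strict_OTSON n d A C})
       \<and> bij_betw (Phi n d Qt)
           {ths. length ths = n \<and> set ths \<subseteq> Theta \<and> (\<forall>k < n. blk_mu Qt (ths ! k) \<noteq> 0)}
           ((\<lambda>(A, C). stack n d C A) ` {(A, C). unreduced_OTSON n d A C})"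
proof -
  interpret orp_setting n d Theta Qt by (rule orp_setting.intro) (rule assms(3))
  have s1: "{(A, C). strict_OTSON n d A C} = {(A, C). OTSON n d A C \<and> (\<forall>i<n. 0 < stack n d C A $$ (i, i))}"
    by (simp add: strict_OTSON_def)
  have s2: "{(A, C). unreduced_OTSON n d A C} = {(A, C). OTSON n d A C \<and> (\<forall>i<n. stack n d C A $$ (i, i) \<noteq> 0)}"
    by (simp add: unreduced_OTSON_def)
  have i1: "(\<lambda>(A, C). stack n d C A) ` {(A, C). strict_OTSON n d A C} = Tset (\<lambda>x. 0 < x)"
    unfolding s1 Tset_def by (rule stack_image[of n d "\<lambda>x. 0 < x"])
  have i2: "(\<lambda>(A, C). stack n d C A) ` {(A, C). unreduced_OTSON n d A C} = Tset (\<lambda>x. x \<noteq> 0)"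
    unfolding s2 Tset_def by (rule stack_image[of n d "\<lambda>x. x \<noteq> 0"])
  show ?thesis unfolding i1 i2
    using main_bij[of "\<lambda>x. 0 < x"] main_bij[of "\<lambda>x. x \<noteq> 0"] by (intro conjI)
qed

end
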